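(* Let $p\ge 1$ and let $(s_n)_{n\in\mathbb{N}}\subset(0,1)$ with $s_n\to0^+$. Let $u\in W^{s_1,p}(\mathbb{T}_T^d)$. Then \[ \lim_{n\to+\infty} s_n\,\mathcal{F}^{s_n}_p(u)=\frac{d\,\omega_d}{p\,T^d}\,\mathcal{F}^0_p(u). \]
   Context: $T>0$, $Q_T=[0,T]^d$. $L^p(\mathbb{T}_T^d)$ is the space of measurable $u:\mathbb{R}^d\to\mathbb{R}$ which are $T$-periodic in each coordinate direction (a.e.) with $u|_{Q_T}\in L^p(Q_T)$. For $s\in(0,1)$, $\mathcal{F}_p^s(u)=\int_{Q_T}\int_{\mathbb{R}^d}\frac{|u(x)-u(y)|^p}{|x-y|^{d+sp}}\,\mathrm{d}y\,\mathrm{d}x$, and $W^{s,p}(\mathbb{T}_T^d)=\{u\in L^p(\mathbb{T}_T^d):\mathcal{F}_p^s(u)<+\infty\}$. $\mathcal{F}_p^0(u)=\int_{Q_T}\int_{Q_T}|u(x)-u(y)|^p\,\mathrm{d}y\,\mathrm{d}x$. $\omega_d$ denotes the Lebesgue measure of the unit ball of $\mathbb{R}^d$ (so $d\omega_d=\mathcal{H}^{d-1}(\mathbb{S}^{d-1})$). *)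

theory Defs
  imports "HOL-Analysis.Analysis"
begin

definition QT :: "real \<Rightarrow> 'a::euclidean_space set" where
  "QT T = cbox 0 (\<Sum>b\<in>Basis. T *\<^sub>R b)"

definition Lp_torus :: "real \<Rightarrow> real \<Rightarrow> ('a::euclidean_space \<Rightarrow> real) \<Rightarrow> bool" where
  "Lp_torus T p u \<longleftrightarrow>
     u \<in> borel_measurable lebesgue \<and>
     (\<forall>b\<in>Basis. AE x in lebesgue. u (x + T *\<^sub>R b) = u x) \<and>
     (\<integral>\<^sup>+ x \<in> QT T. ennreal (\<bar>u x\<bar> powr p) \<partial>lebesgue) < \<infinity>"

definition Fs :: "real \<Rightarrow> real \<Rightarrow> real \<Rightarrow> ('a::euclidean_space \<Rightarrow> real) \<Rightarrow> ennreal" where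
  "Fs T p s u = (\<integral>\<^sup>+ x \<in> QT T. (\<integral>\<^sup>+ y. ennreal (\<bar>u x - u y\<bar> powr p /
        norm (x - y) powr (real DIM('a) + s * p)) \<partial>lebesgue) \<partial>lebesgue)"

definition F0 :: "real \<Rightarrow> real \<Rightarrow> ('a::euclidean_space \<Rightarrow> real) \<Rightarrow> ennreal" where
  "F0 T p u = (\<integral>\<^sup>+ x \<in> QT T. (\<integral>\<^sup>+ y \<in> QT T. ennreal (\<bar>u x - u y\<bar> powr p) \<partial>lebesgue) \<partial>lebesgue)"

definition W_torus :: "real \<Rightarrow> real \<Rightarrow> real \<Rightarrow> ('a::euclidean_space \<Rightarrow> real) \<Rightarrow> bool" where
  "W_torus T s p u \<longleftrightarrow> Lp_torus T p u \<and> Fs T p s u < \<infinity>"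

end

theory Submission
  imports Defs
begin

lemma nn_integral_lborel_shift:
  fixes f :: "'a::euclidean_space \<Rightarrow> ennreal"
  assumes "f \<in> borel_measurable borel"
  shows "(\<integral>\<^sup>+x. f (x + c) \<partial>lborel) = (\<integral>\<^sup>+x. f x \<partial>lborel)"
proof -
  have "(\<integral>\<^sup>+x. f x \<partial>lborel) = (\<integral>\<^sup>+x. f x \<partial>distr lborel borel ((+) c))"
    by (simp add: lborel_distr_plus)
  also have "\<dots> = (\<integral>\<^sup>+x. f (c + x) \<partial>lborel)"
    by (subst nn_integral_distr) (auto simp: assms)
  finally show ?thesis by (simp add: add.commute)
qed

lemma AE_lborel_shift:
  assumes "AE x in lborel. P x"
  shows "AE x in (lborel::'a::euclidean_space measure). P (x + c)"
proof -
  from AE_E[OF assms] obtain N where N0: "{x\<in>space lborel. \<not> P x} \<subseteq> N" "emeasure lborel N = 0" "N \<in> sets lborel"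
    by metis
  have N: "N \<in> null_sets lborel" "{x\<in>space lborel. \<not> P x} \<subseteq> N" using N0 by (auto intro: null_setsI)
  have "emeasure lborel ((\<lambda>x. c + x) -` N \<inter> space lborel) = emeasure (distr lborel borel ((+) c)) N"
    using N by (subst emeasure_distr) auto
  also have "\<dots> = 0" using N0 by (simp add: lborel_distr_plus)
  finally have "(\<lambda>x. c + x) -` N \<in> null_sets lborel"
    using N0 measurable_sets[of "(+) c" borel borel N] by (auto simp: null_sets_def)
  moreover have "{x\<in>space lborel. \<not> P (x + c)} \<subseteq> (\<lambda>x. c + x) -` N"
    using N by (auto simp: add.commute)
  ultimately show ?thesis by (rule AE_I')
qed

lemma emeasure_ball_lborel:
  fixes c :: "'a::euclidean_space"
  assumes "r \<ge> 0"
  shows "emeasure lborel (ball c r) = ennreal (r ^ DIM('a) * measure lborel (ball (0::'a) 1))"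
proof -
  have "emeasure lborel (ball c r) = ennreal (r ^ DIM('a)) * emeasure lborel (ball (0 :: 'a) 1)"
    using emeasure_lebesgue_ball_conv_unit_ball[OF assms, of c] by simp
  also have "\<dots> = ennreal (r ^ DIM('a) * measure lborel (ball (0::'a) 1))"
    using emeasure_lborel_ball_finite[of "0::'a" 1] assms
    by (subst emeasure_eq_ennreal_measure) (auto simp: ennreal_mult')
  finally show ?thesis .
qed

lemma mem_QT: "x \<in> QT T \<longleftrightarrow> (\<forall>b\<in>Basis. 0 \<le> x \<bullet> b \<and> x \<bullet> b \<le> T)"
  by (auto simp: QT_def mem_box inner_sum_left inner_Basis if_distrib sum.delta cong: if_cong)

lemma emeasure_QT:
  assumes "T \<ge> 0"
  shows "emeasure lborel (QT T :: 'a::euclidean_space set) = ennreal (T ^ DIM('a))"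
  using assms unfolding QT_def
  by (subst emeasure_lborel_cbox_eq) (auto simp: inner_sum_left inner_Basis if_distrib sum.delta cong: if_cong)

lemma QT_borel[measurable]: "QT T \<in> sets borel"
  unfolding QT_def by simp

lemma norm_QT:
  fixes x :: "'a::euclidean_space"
  assumes "x \<in> QT T" "T \<ge> 0"
  shows "norm x \<le> T * sqrt DIM('a::euclidean_space)"
proof -
  have "norm x = sqrt (\<Sum>b\<in>Basis. (x \<bullet> b)^2)" by (simp add: norm_eq_sqrt_inner euclidean_inner[of x x] power2_eq_square)
  also have "\<dots> \<le> sqrt (\<Sum>b\<in>(Basis::'a set). T^2)"
  proof (intro real_sqrt_le_mono sum_mono)
    fix b :: 'a assume "b \<in> Basis"
    then show "(x \<bullet> b)^2 \<le> T^2" using assms by (intro power_mono) (auto simp: mem_QT)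
  qed
  also have "\<dots> = T * sqrt DIM('a)" using assms by (simp add: real_sqrt_mult)
  finally show ?thesis .
qed

lemma AE_periodic_nat:
  fixes f :: "'a::euclidean_space \<Rightarrow> 'b"
  assumes "AE z in lborel. f (z + v) = f z"
  shows "AE z in lborel. f (z + real n *\<^sub>R v) = f z"
proof (induction n)
  case 0 then show ?case by simp
next
  case (Suc n)
  have "AE z in lborel. f ((z + real n *\<^sub>R v) + v) = f (z + real n *\<^sub>R v)"
    using AE_lborel_shift[OF assms] .
  with Suc show ?case
    by eventually_elim (simp add: algebra_simps)
qed

lemma AE_periodic_int:
  fixes f :: "'a::euclidean_space \<Rightarrow> 'b"
  assumes "AE z in lborel. f (z + v) = f z"
  shows "AE z in lborel. f (z + real_of_int k *\<^sub>R v) = f z"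
proof (cases "k \<ge> 0")
  case True
  then obtain n where "k = int n" by (metis nonneg_eq_int)
  then show ?thesis using AE_periodic_nat[OF assms, of n] by simp
next
  case False
  define n where "n = nat (- k)"
  have n: "k = - int n" using False by (simp add: n_def)
  have "AE z in lborel. f ((z - real n *\<^sub>R v) + real n *\<^sub>R v) = f (z - real n *\<^sub>R v)"
    using AE_lborel_shift[OF AE_periodic_nat[OF assms, of n], of "- real n *\<^sub>R v"] by simp
  then show ?thesis by eventually_elim (simp add: n algebra_simps)
qed

lemma hyperplane_null: "{z::'a::euclidean_space. z \<bullet> b = a} \<in> null_sets lborel" if "b \<in> Basis"
proof -
  have "negligible {z::'a. z \<bullet> b = a}" using that by (rule negligible_standard_hyperplane)
  then have "{z::'a. z \<bullet> b = a} \<in> null_sets lebesgue" by (simp add: negligible_iff_null_sets)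
  moreover have "{z::'a. z \<bullet> b = a} \<in> sets lborel" by simp
  ultimately show ?thesis by (simp add: null_sets_completion_iff)
qed

definition slab :: "real \<Rightarrow> 'a::euclidean_space \<Rightarrow> real \<Rightarrow> real \<Rightarrow> 'a set" where
  "slab T b \<alpha> \<beta> = {z. (\<forall>i\<in>Basis. i \<noteq> b \<longrightarrow> 0 \<le> z \<bullet> i \<and> z \<bullet> i \<le> T) \<and> \<alpha> \<le> z \<bullet> b \<and> z \<bullet> b < \<beta>}"

lemma slab_borel[measurable]: "slab T b \<alpha> \<beta> \<in> sets borel"
proof -
  have "slab T b \<alpha> \<beta> = (\<Inter>i\<in>Basis. if i = b then UNIV else {z. 0 \<le> z \<bullet> i} \<inter> {z. z \<bullet> i \<le> T}) \<inter> {z. \<alpha> \<le> z \<bullet> b} \<inter> {z. z \<bullet> b < \<beta>}"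
    by (auto simp: slab_def split: if_splits)
  also have "\<dots> \<in> sets borel"
    by (intro sets.Int sets.finite_INT) (auto intro!: borel_closed closed_halfspace_component_ge closed_halfspace_component_le borel_open open_halfspace_component_lt)
  finally show ?thesis .
qed

lemma QT_ae_slab:
  assumes b: "b \<in> Basis"
  shows "AE z in lborel. indicator (QT T) z = (indicator (slab T b 0 T) z :: ennreal)"
proof -
  have "AE z in lborel. z \<notin> {z::'a. z \<bullet> b = T}"
    using hyperplane_null[OF b] by (rule AE_not_in)
  then show ?thesis
  proof eventually_elim
    case (elim z)
    then have "z \<in> QT T \<longleftrightarrow> z \<in> slab T b 0 T"
      using b by (auto simp: mem_QT slab_def less_le)
    then show ?case by (simp add: indicator_def)
  qed
qed

lemma slab_shift:
  assumes b: "b \<in> Basis"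
  shows "(z - c *\<^sub>R b \<in> slab T b \<alpha> \<beta>) \<longleftrightarrow> (z \<in> slab T b (\<alpha> + c) (\<beta> + c))"
proof -
  have "(z - c *\<^sub>R b) \<bullet> i = (if i = b then z \<bullet> i - c else z \<bullet> i)" if "i \<in> Basis" for i
    using b that by (auto simp: inner_diff_left inner_Basis)
  then show ?thesis using b by (auto simp: slab_def)
qed

lemma slab_split:
  assumes "\<alpha> \<le> \<gamma>" "\<gamma> \<le> \<beta>"
  shows "(indicator (slab T b \<alpha> \<beta>) z :: ennreal) = indicator (slab T b \<alpha> \<gamma>) z + indicator (slab T b \<gamma> \<beta>) z"
  using assms by (auto simp: slab_def indicator_def)

lemma cube_shift_dir:
  fixes f :: "'a::euclidean_space \<Rightarrow> ennreal"
  assumes f[measurable]: "f \<in> borel_measurable borel" and T: "T > 0" and b: "b \<in> Basis"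
    and per: "AE z in lborel. f (z + T *\<^sub>R b) = f z"
  shows "(\<integral>\<^sup>+z. f (z + c *\<^sub>R b) * indicator (QT T) z \<partial>lborel) = (\<integral>\<^sup>+z. f z * indicator (QT T) z \<partial>lborel)"
proof -
  define k where "k = \<lfloor>c / T\<rfloor>"
  define c' where "c' = c - real_of_int k * T"
  have "real_of_int k \<le> c / T" "c / T < real_of_int k + 1"
    unfolding k_def by linarith+
  then have "real_of_int k * T \<le> c" "c < (real_of_int k + 1) * T"
    using T by (simp_all add: field_simps)
  then have c': "0 \<le> c'" "c' < T" unfolding c'_def by (simp_all add: algebra_simps)
  have "(\<integral>\<^sup>+z. f (z + c *\<^sub>R b) * indicator (QT T) z \<partial>lborel) = (\<integral>\<^sup>+z. f (z + c' *\<^sub>R b) * indicator (slab T b 0 T) z \<partial>lborel)"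
  proof (rule nn_integral_cong_AE)
    have ae1: "AE z in lborel. f ((z + c' *\<^sub>R b) + real_of_int k *\<^sub>R (T *\<^sub>R b)) = f (z + c' *\<^sub>R b)"
      using AE_lborel_shift[OF AE_periodic_int[OF per, of k], of "c' *\<^sub>R b"] .
    have eq: "z + c' *\<^sub>R b + (real_of_int k * T) *\<^sub>R b = z + c *\<^sub>R b" for z
      by (simp add: c'_def algebra_simps)
    show "AE z in lborel. f (z + c *\<^sub>R b) * indicator (QT T) z = f (z + c' *\<^sub>R b) * indicator (slab T b 0 T) z"
      using ae1 QT_ae_slab[OF b, of T] by eventually_elim (simp add: eq)
  qed
  also have "\<dots> = (\<integral>\<^sup>+y. f y * indicator (slab T b 0 T) (y - c' *\<^sub>R b) \<partial>lborel)"
  proof -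
    have "(\<integral>\<^sup>+y. f y * indicator (slab T b 0 T) (y - c' *\<^sub>R b) \<partial>lborel)
        = (\<integral>\<^sup>+z. f (z + c' *\<^sub>R b) * indicator (slab T b 0 T) ((z + c' *\<^sub>R b) - c' *\<^sub>R b) \<partial>lborel)"
      by (rule nn_integral_lborel_shift[symmetric]) measurable
    then show ?thesis by simp
  qed
  also have "\<dots> = (\<integral>\<^sup>+y. f y * indicator (slab T b c' T) y + f y * indicator (slab T b T (T + c')) y \<partial>lborel)"
  proof (rule nn_integral_cong)
    fix y :: 'a
    have "indicator (slab T b 0 T) (y - c' *\<^sub>R b) = (indicator (slab T b c' (T + c')) y :: ennreal)"
      using slab_shift[OF b, of y c' T 0 T] by (simp add: indicator_def)
    also have "\<dots> = indicator (slab T b c' T) y + indicator (slab T b T (T + c')) y"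
      using c' by (intro slab_split) auto
    finally show "f y * indicator (slab T b 0 T) (y - c' *\<^sub>R b) = f y * indicator (slab T b c' T) y + f y * indicator (slab T b T (T + c')) y"
      by (simp add: distrib_left)
  qed
  also have "\<dots> = (\<integral>\<^sup>+y. f y * indicator (slab T b c' T) y \<partial>lborel) + (\<integral>\<^sup>+y. f y * indicator (slab T b T (T + c')) y \<partial>lborel)"
    by (rule nn_integral_add) measurable
  also have "(\<integral>\<^sup>+y. f y * indicator (slab T b T (T + c')) y \<partial>lborel) = (\<integral>\<^sup>+y. f (y + T *\<^sub>R b) * indicator (slab T b T (T + c')) (y + T *\<^sub>R b) \<partial>lborel)"
    by (rule nn_integral_lborel_shift[symmetric]) measurable
  also have "\<dots> = (\<integral>\<^sup>+y. f y * indicator (slab T b 0 c') y \<partial>lborel)"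
  proof (rule nn_integral_cong_AE)
    have sl: "(y + T *\<^sub>R b \<in> slab T b T (T + c')) \<longleftrightarrow> (y \<in> slab T b 0 c')" for y
      using slab_shift[OF b, where z="y + T *\<^sub>R b" and c=T and T=T and \<alpha>=0 and \<beta>=c'] by (simp add: add.commute)
    show "AE y in lborel. f (y + T *\<^sub>R b) * indicator (slab T b T (T + c')) (y + T *\<^sub>R b) = f y * indicator (slab T b 0 c') y"
      using per by eventually_elim (simp add: indicator_def sl)
  qed
  also have "(\<integral>\<^sup>+y. f y * indicator (slab T b c' T) y \<partial>lborel) + (\<integral>\<^sup>+y. f y * indicator (slab T b 0 c') y \<partial>lborel)
      = (\<integral>\<^sup>+y. f y * indicator (slab T b c' T) y + f y * indicator (slab T b 0 c') y \<partial>lborel)"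
    by (rule nn_integral_add[symmetric]) measurable
  also have "\<dots> = (\<integral>\<^sup>+y. f y * indicator (slab T b 0 T) y \<partial>lborel)"
  proof (rule nn_integral_cong)
    fix y :: 'a
    have "(indicator (slab T b 0 T) y :: ennreal) = indicator (slab T b 0 c') y + indicator (slab T b c' T) y"
      using c' by (intro slab_split) auto
    then show "f y * indicator (slab T b c' T) y + f y * indicator (slab T b 0 c') y = f y * indicator (slab T b 0 T) y"
      by (simp add: distrib_left add.commute)
  qed
  also have "\<dots> = (\<integral>\<^sup>+y. f y * indicator (QT T) y \<partial>lborel)"
    by (rule nn_integral_cong_AE) (use QT_ae_slab[OF b, of T] in eventually_elim, simp)
  finally show ?thesis .
qed

lemma cube_shift:
  fixes f :: "'a::euclidean_space \<Rightarrow> ennreal"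
  assumes f: "f \<in> borel_measurable borel" and T: "T > 0"
    and per: "\<forall>b\<in>Basis. AE z in lborel. f (z + T *\<^sub>R b) = f z"
  shows "(\<integral>\<^sup>+z. f (z + c) * indicator (QT T) z \<partial>lborel) = (\<integral>\<^sup>+z. f z * indicator (QT T) z \<partial>lborel)"
proof -
  have main: "\<forall>f. f \<in> borel_measurable borel \<longrightarrow> (\<forall>b\<in>Basis. AE z in lborel. f (z + T *\<^sub>R b) = f z) \<longrightarrow>
     (\<integral>\<^sup>+z. f (z + (\<Sum>b\<in>B. (c \<bullet> b) *\<^sub>R b)) * indicator (QT T) z \<partial>lborel) = (\<integral>\<^sup>+z. f z * indicator (QT T) z \<partial>lborel)"
    if "finite B" "B \<subseteq> Basis" for B
    using that
  proof (induction B rule: finite_induct)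
    case empty then show ?case by simp
  next
    case (insert b0 B)
    show ?case
    proof (intro allI impI)
      fix f :: "'a \<Rightarrow> ennreal"
      assume f[measurable]: "f \<in> borel_measurable borel" and per: "\<forall>b\<in>Basis. AE z in lborel. f (z + T *\<^sub>R b) = f z"
      define s where "s = (\<Sum>b\<in>B. (c \<bullet> b) *\<^sub>R b)"
      define f1 where "f1 = (\<lambda>y. f (y + s))"
      have f1[measurable]: "f1 \<in> borel_measurable borel" unfolding f1_def by measurable
      have per1: "AE z in lborel. f1 (z + T *\<^sub>R b) = f1 z" if "b \<in> Basis" for b
      proof -
        have "AE z in lborel. f ((z + s) + T *\<^sub>R b) = f (z + s)"
          using AE_lborel_shift[of "\<lambda>z. f (z + T *\<^sub>R b) = f z" s] per that by blast
        then show ?thesis unfolding f1_def by eventually_elim (simp add: algebra_simps)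
      qed
      have b0: "b0 \<in> Basis" using insert by auto
      have "(\<integral>\<^sup>+z. f (z + (\<Sum>b\<in>insert b0 B. (c \<bullet> b) *\<^sub>R b)) * indicator (QT T) z \<partial>lborel)
          = (\<integral>\<^sup>+z. f1 (z + (c \<bullet> b0) *\<^sub>R b0) * indicator (QT T) z \<partial>lborel)"
        using insert by (simp add: f1_def s_def algebra_simps)
      also have "\<dots> = (\<integral>\<^sup>+z. f1 z * indicator (QT T) z \<partial>lborel)"
        by (rule cube_shift_dir[OF f1 T b0 per1[OF b0]])
      also have "\<dots> = (\<integral>\<^sup>+z. f z * indicator (QT T) z \<partial>lborel)"
        unfolding f1_def s_def using insert f per by simp
      finally show "(\<integral>\<^sup>+z. f (z + (\<Sum>b\<in>insert b0 B. (c \<bullet> b) *\<^sub>R b)) * indicator (QT T) z \<partial>lborel) = (\<integral>\<^sup>+z. f z * indicator (QT T) z \<partial>lborel)" .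
    qed
  qed
  show ?thesis using main[of Basis] f per by (simp add: euclidean_representation)
qed

definition Gf :: "real \<Rightarrow> real \<Rightarrow> ('a::euclidean_space \<Rightarrow> real) \<Rightarrow> 'a \<Rightarrow> ennreal" where
  "Gf T p v h = (\<integral>\<^sup>+x. ennreal (\<bar>v x - v (x + h)\<bar> powr p) * indicator (QT T) x \<partial>lborel)"

lemma Gf_meas[measurable]:
  assumes [measurable]: "v \<in> borel_measurable borel"
  shows "Gf T p v \<in> borel_measurable borel"
  unfolding Gf_def by measurable

lemma Gf_per:
  assumes v[measurable]: "v \<in> borel_measurable borel" and per: "AE z in lborel. v (z + T *\<^sub>R b) = v z"
  shows "Gf T p v (h + T *\<^sub>R b) = Gf T p v h"
  unfolding Gf_def
proof (rule nn_integral_cong_AE)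
  have "AE x in lborel. v ((x + h) + T *\<^sub>R b) = v (x + h)"
    using AE_lborel_shift[OF per, of h] .
  then show "AE x in lborel. ennreal (\<bar>v x - v (x + (h + T *\<^sub>R b))\<bar> powr p) * indicator (QT T) x =
        ennreal (\<bar>v x - v (x + h)\<bar> powr p) * indicator (QT T) x"
    by eventually_elim (simp add: add.assoc)
qed

lemma Fs_eq:
  fixes v :: "'a::euclidean_space \<Rightarrow> real"
  assumes v[measurable]: "v \<in> borel_measurable borel"
  shows "Fs T p s v = (\<integral>\<^sup>+h. Gf T p v h * ennreal (1 / norm h powr (real DIM('a) + s * p)) \<partial>lborel)"
proof -
  let ?a = "real DIM('a) + s * p"
  have "Fs T p s v = (\<integral>\<^sup>+x. (\<integral>\<^sup>+y. ennreal (\<bar>v x - v y\<bar> powr p / norm (x - y) powr ?a) \<partial>lborel) * indicator (QT T) x \<partial>lborel)"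
    unfolding Fs_def nn_integral_completion ..
  also have "\<dots> = (\<integral>\<^sup>+x. (\<integral>\<^sup>+h. ennreal (\<bar>v x - v (h + x)\<bar> powr p / norm (x - (h + x)) powr ?a) \<partial>lborel) * indicator (QT T) x \<partial>lborel)"
  proof -
    have "(\<integral>\<^sup>+y. ennreal (\<bar>v x - v y\<bar> powr p / norm (x - y) powr ?a) \<partial>lborel)
        = (\<integral>\<^sup>+h. ennreal (\<bar>v x - v (h + x)\<bar> powr p / norm (x - (h + x)) powr ?a) \<partial>lborel)" for x
      by (rule nn_integral_lborel_shift[symmetric]) measurable
    then show ?thesis by simp
  qed
  also have "\<dots> = (\<integral>\<^sup>+x. (\<integral>\<^sup>+h. ennreal (\<bar>v x - v (x + h)\<bar> powr p / norm h powr ?a) * indicator (QT T) x \<partial>lborel) \<partial>lborel)"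
    by (subst nn_integral_multc[symmetric]) (auto intro!: nn_integral_cong simp: add.commute)
  also have "\<dots> = (\<integral>\<^sup>+h. (\<integral>\<^sup>+x. ennreal (\<bar>v x - v (x + h)\<bar> powr p / norm h powr ?a) * indicator (QT T) x \<partial>lborel) \<partial>lborel)"
    by (rule lborel_pair.Fubini'[symmetric]) measurable
  also have "\<dots> = (\<integral>\<^sup>+h. (\<integral>\<^sup>+x. ennreal (\<bar>v x - v (x + h)\<bar> powr p) * indicator (QT T) x * ennreal (1 / norm h powr ?a) \<partial>lborel) \<partial>lborel)"
    by (intro nn_integral_cong) (simp add: ennreal_mult[symmetric] mult_ac divide_inverse)
  also have "\<dots> = (\<integral>\<^sup>+h. Gf T p v h * ennreal (1 / norm h powr ?a) \<partial>lborel)"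
    unfolding Gf_def by (subst nn_integral_multc) auto
  finally show ?thesis .
qed

lemma F0_eq:
  fixes v :: "'a::euclidean_space \<Rightarrow> real"
  assumes v[measurable]: "v \<in> borel_measurable borel" and T: "T > 0"
    and per: "\<forall>b\<in>Basis. AE z in lborel. v (z + T *\<^sub>R b) = v z"
  shows "F0 T p v = (\<integral>\<^sup>+h. Gf T p v h * indicator (QT T) h \<partial>lborel)"
proof -
  have inner: "(\<integral>\<^sup>+y. ennreal (\<bar>v x - v y\<bar> powr p) * indicator (QT T) y \<partial>lborel)
     = (\<integral>\<^sup>+h. ennreal (\<bar>v x - v (h + x)\<bar> powr p) * indicator (QT T) h \<partial>lborel)" for x
  proof (rule cube_shift[of "\<lambda>y. ennreal (\<bar>v x - v y\<bar> powr p)" T x, symmetric])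
    show "(\<lambda>y. ennreal (\<bar>v x - v y\<bar> powr p)) \<in> borel_measurable borel" by measurable
    show "0 < T" by fact
    show "\<forall>b\<in>Basis. AE z in lborel. ennreal (\<bar>v x - v (z + T *\<^sub>R b)\<bar> powr p) = ennreal (\<bar>v x - v z\<bar> powr p)"
    proof
      fix b :: 'a assume "b \<in> Basis"
      with per have "AE z in lborel. v (z + T *\<^sub>R b) = v z" by blast
      then show "AE z in lborel. ennreal (\<bar>v x - v (z + T *\<^sub>R b)\<bar> powr p) = ennreal (\<bar>v x - v z\<bar> powr p)"
        by eventually_elim simp
    qed
  qed
  have "F0 T p v = (\<integral>\<^sup>+x. (\<integral>\<^sup>+y. ennreal (\<bar>v x - v y\<bar> powr p) * indicator (QT T) y \<partial>lborel) * indicator (QT T) x \<partial>lborel)"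
    unfolding F0_def nn_integral_completion ..
  also have "\<dots> = (\<integral>\<^sup>+x. (\<integral>\<^sup>+h. ennreal (\<bar>v x - v (h + x)\<bar> powr p) * indicator (QT T) h \<partial>lborel) * indicator (QT T) x \<partial>lborel)"
    by (simp only: inner)
  also have "\<dots> = (\<integral>\<^sup>+x. (\<integral>\<^sup>+h. ennreal (\<bar>v x - v (x + h)\<bar> powr p) * indicator (QT T) x * indicator (QT T) h \<partial>lborel) \<partial>lborel)"
    by (subst nn_integral_multc[symmetric]) (auto intro!: nn_integral_cong simp: add.commute mult_ac)
  also have "\<dots> = (\<integral>\<^sup>+h. (\<integral>\<^sup>+x. ennreal (\<bar>v x - v (x + h)\<bar> powr p) * indicator (QT T) x * indicator (QT T) h \<partial>lborel) \<partial>lborel)"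
    by (rule lborel_pair.Fubini'[symmetric]) measurable
  also have "\<dots> = (\<integral>\<^sup>+h. Gf T p v h * indicator (QT T) h \<partial>lborel)"
    unfolding Gf_def by (subst nn_integral_multc) auto
  finally show ?thesis .
qed

lemma ball_borel[measurable]: "ball (z::'a::euclidean_space) r \<in> sets borel"
  by (simp add: borel_open)

lemma ergodic_core:
  fixes G :: "'a::euclidean_space \<Rightarrow> ennreal"
  assumes G[measurable]: "G \<in> borel_measurable borel" and T: "T > 0"
    and per: "\<forall>b\<in>Basis. \<forall>h. G (h + T *\<^sub>R b) = G h" and r: "r \<ge> 0"
  shows "(\<integral>\<^sup>+z. (\<integral>\<^sup>+y. G y * indicator (ball z r) y \<partial>lborel) * indicator (QT T) z \<partial>lborel)
        = (\<integral>\<^sup>+h. G h * indicator (QT T) h \<partial>lborel) * ennreal (r ^ DIM('a) * measure lborel (ball (0::'a) 1))"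
proof -
  let ?A = "\<integral>\<^sup>+h. G h * indicator (QT T) h \<partial>lborel"
  have inner: "(\<integral>\<^sup>+y. G y * indicator (ball z r) y \<partial>lborel) = (\<integral>\<^sup>+h. G (h + z) * indicator (ball 0 r) h \<partial>lborel)" for z
  proof -
    have "(\<integral>\<^sup>+h. G (h + z) * indicator (ball 0 r) h \<partial>lborel) = (\<integral>\<^sup>+h. G (h + z) * indicator (ball z r) (h + z) \<partial>lborel)"
      by (intro nn_integral_cong) (auto simp: indicator_def dist_norm)
    also have "\<dots> = (\<integral>\<^sup>+y. G y * indicator (ball z r) y \<partial>lborel)"
      by (rule nn_integral_lborel_shift[of "\<lambda>y. G y * indicator (ball z r) y"]) measurable
    finally show ?thesis ..
  qed
  have A: "(\<integral>\<^sup>+z. G (z + h) * indicator (QT T) z \<partial>lborel) = ?A" for h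
    using per T by (intro cube_shift) auto
  have "(\<integral>\<^sup>+z. (\<integral>\<^sup>+y. G y * indicator (ball z r) y \<partial>lborel) * indicator (QT T) z \<partial>lborel)
      = (\<integral>\<^sup>+z. (\<integral>\<^sup>+h. G (h + z) * indicator (ball 0 r) h * indicator (QT T) z \<partial>lborel) \<partial>lborel)"
    by (simp only: inner, subst nn_integral_multc[symmetric]) auto
  also have "\<dots> = (\<integral>\<^sup>+h. (\<integral>\<^sup>+z. G (h + z) * indicator (ball 0 r) h * indicator (QT T) z \<partial>lborel) \<partial>lborel)"
    by (rule lborel_pair.Fubini'[symmetric]) measurable
  also have "\<dots> = (\<integral>\<^sup>+h. (\<integral>\<^sup>+z. G (z + h) * indicator (QT T) z \<partial>lborel) * indicator (ball 0 r) h \<partial>lborel)"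
    by (subst nn_integral_multc[symmetric]) (auto intro!: nn_integral_cong simp: add.commute mult_ac)
  also have "\<dots> = (\<integral>\<^sup>+h. ?A * indicator (ball (0::'a) r) h \<partial>lborel)"
    by (simp only: A)
  also have "\<dots> = ?A * emeasure lborel (ball (0::'a) r)"
    by (subst nn_integral_cmult_indicator) auto
  also have "\<dots> = ?A * ennreal (r ^ DIM('a) * measure lborel (ball (0::'a) 1))"
    using r by (simp add: emeasure_ball_lborel)
  finally show ?thesis .
qed

lemma ergodic_bounds:
  fixes G :: "'a::euclidean_space \<Rightarrow> ennreal"
  assumes G[measurable]: "G \<in> borel_measurable borel" and T: "T > 0"
    and per: "\<forall>b\<in>Basis. \<forall>h. G (h + T *\<^sub>R b) = G h"
  defines "D \<equiv> T * sqrt DIM('a)"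
  defines "A \<equiv> \<integral>\<^sup>+h. G h * indicator (QT T) h \<partial>lborel"
  defines "\<omega> \<equiv> measure lborel (ball (0::'a) 1)"
  shows "\<And>\<rho>. \<rho> \<ge> 0 \<Longrightarrow> ennreal (T ^ DIM('a)) * (\<integral>\<^sup>+h. G h * indicator (ball 0 \<rho>) h \<partial>lborel) \<le> A * ennreal ((\<rho> + D) ^ DIM('a) * \<omega>)"
    and "\<And>\<rho>. \<rho> \<ge> D \<Longrightarrow> A * ennreal ((\<rho> - D) ^ DIM('a) * \<omega>) \<le> ennreal (T ^ DIM('a)) * (\<integral>\<^sup>+h. G h * indicator (ball 0 \<rho>) h \<partial>lborel)"
proof -
  let ?M = "\<lambda>r. \<integral>\<^sup>+h. G h * indicator (ball 0 r) h \<partial>lborel"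
  have D: "D \<ge> 0" using T by (simp add: D_def)
  have nz: "norm z \<le> D" if "z \<in> QT T" for z :: 'a
    using norm_QT[OF that] T by (simp add: D_def)
  have Mz_le: "(\<integral>\<^sup>+y. G y * indicator (ball z r) y \<partial>lborel) \<le> ?M (r + D)" if "z \<in> QT T" for z r
  proof (intro nn_integral_mono)
    fix y
    have "y \<in> ball z r \<Longrightarrow> y \<in> ball 0 (r + D)"
      using nz[OF that] norm_triangle_ineq[of "y - z" z] by (auto simp: dist_norm norm_minus_commute)
    then show "G y * indicator (ball z r) y \<le> G y * indicator (ball 0 (r + D)) y"
      by (auto simp: indicator_def)
  qed
  have Mz_ge: "?M (r - D) \<le> (\<integral>\<^sup>+y. G y * indicator (ball z r) y \<partial>lborel)" if "z \<in> QT T" for z r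
  proof (intro nn_integral_mono)
    fix y
    have "y \<in> ball 0 (r - D) \<Longrightarrow> y \<in> ball z r"
      using nz[OF that] norm_triangle_ineq4[of y z] by (auto simp: dist_norm norm_minus_commute)
    then show "G y * indicator (ball 0 (r - D)) y \<le> G y * indicator (ball z r) y"
      by (auto simp: indicator_def)
  qed
  have QTm: "emeasure lborel (QT T :: 'a set) = ennreal (T ^ DIM('a))" using T by (simp add: emeasure_QT)
  have QTint: "(\<integral>\<^sup>+z. c * indicator (QT T :: 'a set) z \<partial>lborel) = c * ennreal (T ^ DIM('a))" for c
    by (subst nn_integral_cmult_indicator) (auto simp: QTm)
  show "ennreal (T ^ DIM('a)) * ?M \<rho> \<le> A * ennreal ((\<rho> + D) ^ DIM('a) * \<omega>)" if "\<rho> \<ge> 0" for \<rho>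
  proof -
    have "ennreal (T ^ DIM('a)) * ?M \<rho> = (\<integral>\<^sup>+z. ?M ((\<rho> + D) - D) * indicator (QT T :: 'a set) z \<partial>lborel)"
      by (subst QTint) (simp add: mult.commute)
    also have "\<dots> \<le> (\<integral>\<^sup>+z. (\<integral>\<^sup>+y. G y * indicator (ball z (\<rho> + D)) y \<partial>lborel) * indicator (QT T :: 'a set) z \<partial>lborel)"
      by (intro nn_integral_mono) (use Mz_ge[of _ "\<rho> + D"] in \<open>auto simp: indicator_def\<close>)
    also have "\<dots> = A * ennreal ((\<rho> + D) ^ DIM('a) * \<omega>)"
      unfolding A_def \<omega>_def using that D by (subst ergodic_core[OF G T per]) (auto simp: mult_ac)
    finally show ?thesis .
  qed
  show "A * ennreal ((\<rho> - D) ^ DIM('a) * \<omega>) \<le> ennreal (T ^ DIM('a)) * ?M \<rho>" if "\<rho> \<ge> D" for \<rho>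
  proof -
    have "A * ennreal ((\<rho> - D) ^ DIM('a) * \<omega>) = (\<integral>\<^sup>+z. (\<integral>\<^sup>+y. G y * indicator (ball z (\<rho> - D)) y \<partial>lborel) * indicator (QT T :: 'a set) z \<partial>lborel)"
      unfolding A_def \<omega>_def using that D by (subst ergodic_core[OF G T per]) (auto simp: mult_ac)
    also have "\<dots> \<le> (\<integral>\<^sup>+z. ?M ((\<rho> - D) + D) * indicator (QT T :: 'a set) z \<partial>lborel)"
      by (intro nn_integral_mono) (use Mz_le[of _ "\<rho> - D"] in \<open>auto simp: indicator_def\<close>)
    also have "\<dots> = ennreal (T ^ DIM('a)) * ?M \<rho>"
      by (subst QTint) (simp add: mult.commute)
    finally show ?thesis .
  qed
qed

lemma powr_tail:
  assumes r: "r > 0" and b: "b > 0"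
  shows "(\<integral>\<^sup>+t. ennreal (t powr (-b-1)) * indicator {r..} t \<partial>lborel) = ennreal (r powr (-b) / b)"
proof -
  have "((\<lambda>x. x powr (-b-1)) has_integral -(r powr (-b-1+1)) / (-b-1+1)) {r..}"
    using r b by (intro has_integral_powr_to_inf) auto
  then have I: "((\<lambda>x. x powr (-b-1)) has_integral r powr (-b) / b) {r..}" by simp
  show ?thesis
    by (rule nn_integral_has_integral_lebesgue'[OF _ I]) auto
qed

lemma powr_tail':
  assumes r: "r > 0" and a: "a > 0"
  shows "(\<integral>\<^sup>+t. ennreal (a * t powr (-a-1)) * indicator {r..} t \<partial>lborel) = ennreal (r powr (-a))"
proof -
  have "(\<integral>\<^sup>+t. ennreal (a * t powr (-a-1)) * indicator {r..} t \<partial>lborel) = (\<integral>\<^sup>+t. ennreal a * (ennreal (t powr (-a-1)) * indicator {r..} t) \<partial>lborel)"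
    using a by (intro nn_integral_cong) (simp add: ennreal_mult mult_ac)
  also have "\<dots> = ennreal a * ennreal (r powr (-a) / a)"
    using r a by (subst nn_integral_cmult) (auto simp: powr_tail)
  also have "\<dots> = ennreal (r powr (-a))"
    using a by (simp add: ennreal_mult[symmetric])
  finally show ?thesis .
qed

lemma pred_norm_le1[measurable]:
  "Measurable.pred (borel \<Otimes>\<^sub>M borel) (\<lambda>x::real \<times> 'a::euclidean_space. fst x \<in> {norm (snd x)..})"
proof -
  have "{x \<in> space (borel \<Otimes>\<^sub>M borel). fst x \<in> {norm (snd x)..}} = {x::real \<times> 'a. norm (snd x) \<le> fst x}"
    by (auto simp: space_pair_measure)
  moreover have "closed {x::real \<times> 'a. norm (snd x) \<le> fst x}"
    by (intro closed_Collect_le continuous_intros)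
  ultimately show ?thesis by (simp add: pred_def borel_prod)
qed

lemma pred_norm_le2[measurable]:
  "Measurable.pred (borel \<Otimes>\<^sub>M borel) (\<lambda>x::'a::euclidean_space \<times> real. snd x \<in> {norm (fst x)..})"
proof -
  have "{x \<in> space (borel \<Otimes>\<^sub>M borel). snd x \<in> {norm (fst x)..}} = {x::'a \<times> real. norm (fst x) \<le> snd x}"
    by (auto simp: space_pair_measure)
  moreover have "closed {x::'a \<times> real. norm (fst x) \<le> snd x}"
    by (intro closed_Collect_le continuous_intros)
  ultimately show ?thesis by (simp add: pred_def borel_prod)
qed

lemma layer_cake:
  fixes G :: "'a::euclidean_space \<Rightarrow> ennreal"
  assumes G[measurable]: "G \<in> borel_measurable borel" and a: "a > 0"
  shows "(\<integral>\<^sup>+h. G h * ennreal (1 / norm h powr a) * indicator {h. 1 \<le> norm h} h \<partial>lborel)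
   = (\<integral>\<^sup>+t. ennreal (a * t powr (-a-1)) * indicator {1..} t * (\<integral>\<^sup>+h. G h * indicator {h. 1 \<le> norm h \<and> norm h \<le> t} h \<partial>lborel) \<partial>lborel)"
proof -
  have pw: "ennreal (1 / norm h powr a) * indicator {h. 1 \<le> norm h} h
      = (\<integral>\<^sup>+t. ennreal (a * t powr (-a-1)) * indicator {h. 1 \<le> norm h} h * indicator {norm h..} t \<partial>lborel)" for h :: 'a
  proof (cases "1 \<le> norm h")
    case True
    then have "(\<integral>\<^sup>+t. ennreal (a * t powr (-a-1)) * indicator {h. 1 \<le> norm h} h * indicator {norm h..} t \<partial>lborel)
        = (\<integral>\<^sup>+t. ennreal (a * t powr (-a-1)) * indicator {norm h..} t \<partial>lborel)" by simp
    also have "\<dots> = ennreal (norm h powr (-a))" using True a by (intro powr_tail') auto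
    finally show ?thesis using True by (simp add: powr_minus_divide)
  qed simp
  have "(\<integral>\<^sup>+h. G h * ennreal (1 / norm h powr a) * indicator {h. 1 \<le> norm h} h \<partial>lborel)
      = (\<integral>\<^sup>+h. (\<integral>\<^sup>+t. G h * (ennreal (a * t powr (-a-1)) * indicator {h. 1 \<le> norm h} h * indicator {norm h..} t) \<partial>lborel) \<partial>lborel)"
    by (intro nn_integral_cong) (simp add: mult.assoc pw nn_integral_cmult)
  also have "\<dots> = (\<integral>\<^sup>+t. (\<integral>\<^sup>+h. G h * (ennreal (a * t powr (-a-1)) * indicator {h. 1 \<le> norm h} h * indicator {norm h..} t) \<partial>lborel) \<partial>lborel)"
    by (rule lborel_pair.Fubini') measurable
  also have "\<dots> = (\<integral>\<^sup>+t. (\<integral>\<^sup>+h. ennreal (a * t powr (-a-1)) * indicator {1..} t * (G h * indicator {h. 1 \<le> norm h \<and> norm h \<le> t} h) \<partial>lborel) \<partial>lborel)"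
    by (intro nn_integral_cong) (auto simp: indicator_def mult.commute)
  also have "\<dots> = (\<integral>\<^sup>+t. ennreal (a * t powr (-a-1)) * indicator {1..} t * (\<integral>\<^sup>+h. G h * indicator {h. 1 \<le> norm h \<and> norm h \<le> t} h \<partial>lborel) \<partial>lborel)"
    by (intro nn_integral_cong) (subst nn_integral_cmult, auto)
  finally show ?thesis .
qed

lemma powr_le_one_le': "1 \<le> (t::real) \<Longrightarrow> e \<le> 0 \<Longrightarrow> t powr e \<le> 1"
  using powr_mono[of e 0 t] by simp

lemma ennreal_div_eq: "c > 0 \<Longrightarrow> ennreal (y / c) = ennreal (1 / c) * ennreal y"
proof (cases "y \<ge> 0")
  case True
  assume "c > 0" then show ?thesis using True by (simp add: ennreal_mult[symmetric])
next
  case False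
  assume c: "c > 0"
  then have "y / c \<le> 0" using False by (simp add: divide_nonpos_pos)
  then show ?thesis using False by (simp add: ennreal_neg)
qed

lemma ennreal_mult_le_divide:
  assumes c: "c > 0" and "ennreal c * x \<le> ennreal y"
  shows "x \<le> ennreal (y / c)"
proof -
  have "x = ennreal (1 / c) * (ennreal c * x)"
    using c by (simp add: mult.assoc[symmetric] ennreal_mult[symmetric])
  also have "\<dots> \<le> ennreal (1 / c) * ennreal y" by (intro mult_left_mono assms) auto
  also have "\<dots> = ennreal (y / c)" by (rule ennreal_div_eq[OF c, symmetric])
  finally show ?thesis .
qed

lemma ennreal_divide_le_mult:
  assumes c: "c > 0" and "ennreal y \<le> ennreal c * x"
  shows "ennreal (y / c) \<le> x"
proof -
  have "ennreal (y / c) = ennreal (1 / c) * ennreal y"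
    using c by (rule ennreal_div_eq)
  also have "\<dots> \<le> ennreal (1 / c) * (ennreal c * x)" by (intro mult_left_mono assms) auto
  also have "\<dots> = x"
    using c by (simp add: mult.assoc[symmetric] ennreal_mult[symmetric])
  finally show ?thesis .
qed

lemma outer_upper:
  fixes N :: "real \<Rightarrow> ennreal" and d :: nat
  assumes N[measurable]: "N \<in> borel_measurable borel" and K: "K \<ge> 0" and D: "D \<ge> 0"
    and Nup: "\<And>t. t \<ge> 1 \<Longrightarrow> N t \<le> ennreal (K * (t + 1 + D) ^ d)"
    and s: "s > 0" and p: "p > 0" and t0: "t0 \<ge> 1"
  defines "a \<equiv> real d + s * p"
  shows "(\<integral>\<^sup>+t. ennreal (a * t powr (-a-1)) * indicator {1..} t * N t \<partial>lborel)
     \<le> ennreal (a * K * (t0 + 1 + D) ^ d * t0 + K * ((t0 + 1 + D) / t0) ^ d * a / (s * p))"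
proof -
  define B where "B = (t0 + 1 + D) ^ d"
  define \<rho> where "\<rho> = (t0 + 1 + D) / t0"
  have a: "a > 0" using s p by (simp add: a_def add_nonneg_pos)
  have B: "B \<ge> 0" using D t0 by (simp add: B_def)
  have \<rho>: "\<rho> \<ge> 0" using D t0 by (simp add: \<rho>_def)
  have pw: "ennreal (a * t powr (-a-1)) * indicator {1..} t * N t
      \<le> ennreal (a * K * B) * indicator {1..t0} t + ennreal (a * K * \<rho> ^ d * t powr (-(s*p)-1)) * indicator {t0..} t" for t
  proof (cases "t < 1")
    case True then show ?thesis by simp
  next
    case False
    then have t1: "t \<ge> 1" by simp
    then have tpos: "t > 0" by simp
    show ?thesis
    proof (cases "t \<le> t0")
      case True
      have "t powr (-a-1) \<le> 1" using t1 a by (intro powr_le_one_le') auto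
      then have le1: "ennreal (a * t powr (-a-1)) \<le> ennreal a"
        using a by (intro ennreal_leI) (auto intro: mult_left_le)
      have "(t + 1 + D) ^ d \<le> B" unfolding B_def using True D t1 by (intro power_mono) auto
      then have "N t \<le> ennreal (K * B)" using Nup[OF t1] K
        by (meson ennreal_leI mult_left_mono order.trans)
      then have "ennreal (a * t powr (-a-1)) * N t \<le> ennreal a * ennreal (K * B)"
        using le1 by (intro mult_mono) auto
      also have "\<dots> = ennreal (a * K * B)" using a K B by (subst ennreal_mult[symmetric]) (auto simp: mult_ac)
      finally have "ennreal (a * t powr (-a-1)) * N t \<le> ennreal (a * K * B)" .
      then have "ennreal (a * t powr (-a-1)) * indicator {1..} t * N t \<le> ennreal (a * K * B) * indicator {1..t0} t"
        using True t1 by (simp add: indicator_def)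
      then show ?thesis by (rule add_increasing2[rotated]) simp
    next
      case False
      then have tt0: "t > t0" by simp
      have "t + 1 + D \<le> \<rho> * t"
      proof -
        have "(1 + D) / t \<le> (1 + D) / t0" using tt0 t0 D by (intro divide_left_mono) auto
        then have "t + 1 + D \<le> t + t * ((1 + D) / t0)"
          using tpos by (simp add: field_simps)
        also have "\<dots> = \<rho> * t" using t0 by (simp add: \<rho>_def field_simps)
        finally show ?thesis .
      qed
      then have "(t + 1 + D) ^ d \<le> (\<rho> * t) ^ d" using D t1 by (intro power_mono) auto
      then have "a * t powr (-a-1) * (K * (t + 1 + D) ^ d) \<le> a * t powr (-a-1) * (K * (\<rho> * t) ^ d)"
        using a K by (intro mult_left_mono) auto
      also have "\<dots> = a * K * \<rho> ^ d * (t powr (-a-1) * t powr (real d))"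
        using tpos by (simp add: powr_realpow power_mult_distrib mult_ac)
      also have "t powr (-a-1) * t powr (real d) = t powr (-(s*p)-1)"
        using tpos by (simp add: powr_add[symmetric] a_def)
      finally have ineq: "a * t powr (-a-1) * (K * (t + 1 + D) ^ d) \<le> a * K * \<rho> ^ d * t powr (-(s*p)-1)" .
      have "ennreal (a * t powr (-a-1)) * N t \<le> ennreal (a * t powr (-a-1)) * ennreal (K * (t + 1 + D) ^ d)"
        using Nup[OF t1] by (intro mult_left_mono) auto
      also have "\<dots> = ennreal (a * t powr (-a-1) * (K * (t + 1 + D) ^ d))"
        using a K D t1 by (subst ennreal_mult[symmetric]) auto
      also have "\<dots> \<le> ennreal (a * K * \<rho> ^ d * t powr (-(s*p)-1))"
        using ineq by (rule ennreal_leI)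
      finally show ?thesis using tt0 t1 by (simp add: indicator_def)
    qed
  qed
  have "(\<integral>\<^sup>+t. ennreal (a * t powr (-a-1)) * indicator {1..} t * N t \<partial>lborel)
     \<le> (\<integral>\<^sup>+t. ennreal (a * K * B) * indicator {1..t0} t + ennreal (a * K * \<rho> ^ d * t powr (-(s*p)-1)) * indicator {t0..} t \<partial>lborel)"
    by (intro nn_integral_mono pw)
  also have "\<dots> = (\<integral>\<^sup>+t. ennreal (a * K * B) * indicator {1..t0} t \<partial>lborel) + (\<integral>\<^sup>+t. ennreal (a * K * \<rho> ^ d) * (ennreal (t powr (-(s*p)-1)) * indicator {t0..} t) \<partial>lborel)"
    using a K \<rho> by (subst nn_integral_add[symmetric]) (auto intro!: nn_integral_cong simp: ennreal_mult mult_ac)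
  also have "\<dots> = ennreal (a * K * B) * ennreal (t0 - 1) + ennreal (a * K * \<rho> ^ d) * ennreal (t0 powr (-(s*p)) / (s*p))"
    using t0 s p by (simp add: nn_integral_cmult nn_integral_cmult_indicator powr_tail)
  also have "\<dots> = ennreal (a * K * B * (t0 - 1) + a * K * \<rho> ^ d * (t0 powr (-(s*p)) / (s*p)))"
    using a K B \<rho> t0 s p by (simp add: ennreal_mult[symmetric] ennreal_plus[symmetric] del: ennreal_plus)
  also have "\<dots> \<le> ennreal (a * K * (t0 + 1 + D) ^ d * t0 + K * ((t0 + 1 + D) / t0) ^ d * a / (s * p))"
  proof (intro ennreal_leI add_mono)
    show "a * K * B * (t0 - 1) \<le> a * K * (t0 + 1 + D) ^ d * t0"
      using a K B unfolding B_def by (intro mult_left_mono) auto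
    have "t0 powr (-(s*p)) \<le> 1" using t0 s p by (intro powr_le_one_le') auto
    then have "t0 powr (-(s*p)) / (s*p) \<le> 1 / (s*p)" using s p by (intro divide_right_mono) auto
    moreover have "0 \<le> a * K * \<rho> ^ d" using a K \<rho> by simp
    ultimately have "a * K * \<rho> ^ d * (t0 powr (-(s*p)) / (s*p)) \<le> a * K * \<rho> ^ d * (1 / (s*p))"
      by (intro mult_left_mono)
    also have "\<dots> = K * \<rho> ^ d * a / (s * p)" by simp
    finally show "a * K * \<rho> ^ d * (t0 powr (-(s*p)) / (s*p)) \<le> K * ((t0 + 1 + D) / t0) ^ d * a / (s * p)"
      unfolding \<rho>_def .
  qed
  finally show ?thesis .
qed

lemma outer_lower:
  fixes N :: "real \<Rightarrow> ennreal" and d :: nat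
  assumes N[measurable]: "N \<in> borel_measurable borel" and K: "K \<ge> 0" and D: "D \<ge> 0"
    and Nlo: "\<And>t. t \<ge> 1 \<Longrightarrow> t \<ge> D \<Longrightarrow> ennreal (K * (t - D) ^ d) \<le> N t + M1"
    and s: "s > 0" and p: "p > 0" and t0: "t0 \<ge> 1" "t0 \<ge> D"
  defines "a \<equiv> real d + s * p"
  shows "ennreal (K * ((t0 - D) / t0) ^ d * a * t0 powr (-(s*p)) / (s*p))
     \<le> (\<integral>\<^sup>+t. ennreal (a * t powr (-a-1)) * indicator {1..} t * N t \<partial>lborel) + M1"
proof -
  define \<sigma> where "\<sigma> = (t0 - D) / t0"
  have a: "a > 0" using s p by (simp add: a_def add_nonneg_pos)
  have \<sigma>: "\<sigma> \<ge> 0" using D t0 by (simp add: \<sigma>_def)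
  have pw: "ennreal (a * K * \<sigma> ^ d) * (ennreal (t powr (-(s*p)-1)) * indicator {t0..} t)
      \<le> ennreal (a * t powr (-a-1)) * indicator {t0..} t * (N t + M1)" for t
  proof (cases "t \<ge> t0")
    case False then show ?thesis by simp
  next
    case True
    then have t1: "t \<ge> 1" "t \<ge> D" using t0 by auto
    then have tpos: "t > 0" by simp
    have "\<sigma> * t \<le> t - D"
    proof -
      have "D * t / t0 \<ge> D" using True t0 D by (simp add: field_simps mult_left_mono)
      then show ?thesis using t0 by (simp add: \<sigma>_def field_simps)
    qed
    then have "(\<sigma> * t) ^ d \<le> (t - D) ^ d" using \<sigma> tpos by (intro power_mono) auto
    then have ineq: "a * t powr (-a-1) * (K * (\<sigma> * t) ^ d) \<le> a * t powr (-a-1) * (K * (t - D) ^ d)"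
      using a K by (intro mult_left_mono) auto
    have "a * t powr (-a-1) * (K * (\<sigma> * t) ^ d) = a * K * \<sigma> ^ d * (t powr (-a-1) * t powr (real d))"
      using tpos by (simp add: powr_realpow power_mult_distrib mult_ac)
    also have "t powr (-a-1) * t powr (real d) = t powr (-(s*p)-1)"
      using tpos by (simp add: powr_add[symmetric] a_def)
    finally have eq: "a * t powr (-a-1) * (K * (\<sigma> * t) ^ d) = a * K * \<sigma> ^ d * t powr (-(s*p)-1)" .
    have "ennreal (a * K * \<sigma> ^ d) * ennreal (t powr (-(s*p)-1)) = ennreal (a * K * \<sigma> ^ d * t powr (-(s*p)-1))"
      using a K \<sigma> by (simp add: ennreal_mult[symmetric])
    also have "\<dots> \<le> ennreal (a * t powr (-a-1) * (K * (t - D) ^ d))"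
      using ineq eq by (intro ennreal_leI) simp
    also have "\<dots> = ennreal (a * t powr (-a-1)) * ennreal (K * (t - D) ^ d)"
      using a K t1 by (subst ennreal_mult[symmetric]) auto
    also have "\<dots> \<le> ennreal (a * t powr (-a-1)) * (N t + M1)"
      using Nlo[OF t1] by (intro mult_left_mono) auto
    finally show ?thesis using True by (simp add: indicator_def mult.assoc)
  qed
  have "ennreal (K * ((t0 - D) / t0) ^ d * a * t0 powr (-(s*p)) / (s*p))
      = ennreal (a * K * \<sigma> ^ d) * ennreal (t0 powr (-(s*p)) / (s*p))"
    using a K \<sigma> s p by (simp add: ennreal_mult[symmetric] \<sigma>_def mult_ac)
  also have "\<dots> = (\<integral>\<^sup>+t. ennreal (a * K * \<sigma> ^ d) * (ennreal (t powr (-(s*p)-1)) * indicator {t0..} t) \<partial>lborel)"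
    using t0 s p by (simp add: nn_integral_cmult powr_tail)
  also have "\<dots> \<le> (\<integral>\<^sup>+t. ennreal (a * t powr (-a-1)) * indicator {t0..} t * (N t + M1) \<partial>lborel)"
    by (intro nn_integral_mono pw)
  also have "\<dots> = (\<integral>\<^sup>+t. ennreal (a * t powr (-a-1)) * indicator {t0..} t * N t \<partial>lborel)
      + (\<integral>\<^sup>+t. (ennreal (a * t powr (-a-1)) * indicator {t0..} t) * M1 \<partial>lborel)"
    by (subst nn_integral_add[symmetric]) (auto intro!: nn_integral_cong simp: distrib_left)
  also have "(\<integral>\<^sup>+t. ennreal (a * t powr (-a-1)) * indicator {t0..} t * N t \<partial>lborel)
      \<le> (\<integral>\<^sup>+t. ennreal (a * t powr (-a-1)) * indicator {1..} t * N t \<partial>lborel)"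
    using t0 by (intro nn_integral_mono) (auto simp: indicator_def)
  also have "(\<integral>\<^sup>+t. (ennreal (a * t powr (-a-1)) * indicator {t0..} t) * M1 \<partial>lborel) = ennreal (t0 powr (-a)) * M1"
    using t0 a by (subst nn_integral_multc) (auto simp: powr_tail')
  also have "\<dots> \<le> 1 * M1"
    using t0 a by (intro mult_right_mono) (auto simp: powr_le_one_le')
  finally show ?thesis by simp
qed

lemma sandwich_eps:
  fixes f :: "nat \<Rightarrow> real" and U L :: "real \<Rightarrow> nat \<Rightarrow> real" and u l :: "real \<Rightarrow> real"
  assumes ev: "\<And>t. t \<ge> tlow \<Longrightarrow> eventually (\<lambda>n. L t n \<le> f n \<and> f n \<le> U t n) sequentially"
    and U: "\<And>t. t \<ge> tlow \<Longrightarrow> U t \<longlonglongrightarrow> u t" and L: "\<And>t. t \<ge> tlow \<Longrightarrow> L t \<longlonglongrightarrow> l t"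
    and u: "(u \<longlongrightarrow> c) at_top" and l: "(l \<longlongrightarrow> c) at_top"
  shows "f \<longlonglongrightarrow> c"
proof (rule tendstoI)
  fix e :: real assume e: "e > 0"
  then have e2: "e / 2 > 0" by simp
  have "eventually (\<lambda>t. dist (u t) c < e / 2 \<and> dist (l t) c < e / 2 \<and> t \<ge> tlow) at_top"
    using tendstoD[OF u e2] tendstoD[OF l e2] eventually_ge_at_top[of tlow] by eventually_elim auto
  then obtain t0 where t0: "\<forall>t\<ge>t0. dist (u t) c < e / 2 \<and> dist (l t) c < e / 2 \<and> t \<ge> tlow"
    by (auto simp: eventually_at_top_linorder)
  define t where "t = t0"
  have t: "dist (u t) c < e / 2" "dist (l t) c < e / 2" "t \<ge> tlow" using t0 unfolding t_def by auto
  show "eventually (\<lambda>n. dist (f n) c < e) sequentially"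
    using ev[OF t(3)] tendstoD[OF U[OF t(3)] e2] tendstoD[OF L[OF t(3)] e2]
  proof eventually_elim
    case (elim n)
    show ?case using elim t unfolding dist_real_def abs_less_iff by linarith
  qed
qed

lemma lim_ratio_plus:
  fixes c :: real
  shows "((\<lambda>t. (t + c) / t) \<longlongrightarrow> 1) at_top"
proof -
  have "((\<lambda>t::real. inverse t) \<longlongrightarrow> 0) at_top"
    by (rule tendsto_inverse_0_at_top[OF filterlim_ident])
  then have "((\<lambda>t. 1 + c * inverse t) \<longlongrightarrow> 1 + c * 0) at_top"
    by (intro tendsto_add tendsto_const tendsto_mult)
  then have lim: "((\<lambda>t. 1 + c * inverse t) \<longlongrightarrow> 1) at_top" by simp
  have ev: "eventually (\<lambda>t. 1 + c * inverse t = (t + c) / t) at_top"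
    using eventually_gt_at_top[of 0] by eventually_elim (simp add: field_simps)
  show ?thesis by (rule Lim_transform_eventually[OF lim ev])
qed

lemma abstract_limit:
  fixes G :: "'a::euclidean_space \<Rightarrow> ennreal" and s :: "nat \<Rightarrow> real" and N :: "real \<Rightarrow> ennreal"
  assumes G[measurable]: "G \<in> borel_measurable borel" and p: "p > 0"
    and spos: "\<forall>n. 0 < s n" and s0: "s \<longlonglongrightarrow> 0" and s0pos: "\<sigma>0 > 0"
    and fin0: "(\<integral>\<^sup>+h. G h * ennreal (1 / norm h powr (real DIM('a) + \<sigma>0 * p)) \<partial>lborel) < \<infinity>"
    and N_def: "N = (\<lambda>t. \<integral>\<^sup>+h. G h * indicator {h. 1 \<le> norm h \<and> norm h \<le> t} h \<partial>lborel)"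
    and K: "K \<ge> 0" and D: "D \<ge> 0" and M1: "M1 < \<infinity>"
    and Nup: "\<And>t. t \<ge> 1 \<Longrightarrow> N t \<le> ennreal (K * (t + 1 + D) ^ DIM('a))"
    and Nlo: "\<And>t. t \<ge> 1 \<Longrightarrow> t \<ge> D \<Longrightarrow> ennreal (K * (t - D) ^ DIM('a)) \<le> N t + M1"
  shows "(\<lambda>n. ennreal (s n) * (\<integral>\<^sup>+h. G h * ennreal (1 / norm h powr (real DIM('a) + s n * p)) \<partial>lborel))
      \<longlonglongrightarrow> ennreal (K * real DIM('a) / p)"
proof -
  define d where "d = DIM('a)"
  define F where "F = (\<lambda>\<sigma>. \<integral>\<^sup>+h. G h * ennreal (1 / norm h powr (real d + \<sigma> * p)) \<partial>lborel)"
  define Outer where "Outer = (\<lambda>\<sigma>. \<integral>\<^sup>+t. ennreal ((real d + \<sigma> * p) * t powr (-(real d + \<sigma> * p)-1)) * indicator {1..} t * N t \<partial>lborel)"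
  have Nm[measurable]: "N \<in> borel_measurable borel" unfolding N_def by measurable
  have split: "F \<sigma> \<le> F \<sigma>0 + Outer \<sigma>" if "0 < \<sigma>" "\<sigma> \<le> \<sigma>0" for \<sigma>
  proof -
    let ?a = "real d + \<sigma> * p"
    have apos: "?a > 0" using that p by (simp add: add_nonneg_pos)
    have "F \<sigma> = (\<integral>\<^sup>+h. G h * ennreal (1 / norm h powr ?a) * indicator {h. norm h < 1} h
                     + G h * ennreal (1 / norm h powr ?a) * indicator {h. 1 \<le> norm h} h \<partial>lborel)"
      unfolding F_def by (intro nn_integral_cong) (auto simp: indicator_def)
    also have "\<dots> = (\<integral>\<^sup>+h. G h * ennreal (1 / norm h powr ?a) * indicator {h. norm h < 1} h \<partial>lborel)
                     + (\<integral>\<^sup>+h. G h * ennreal (1 / norm h powr ?a) * indicator {h. 1 \<le> norm h} h \<partial>lborel)"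
      by (rule nn_integral_add) measurable
    also have "(\<integral>\<^sup>+h. G h * ennreal (1 / norm h powr ?a) * indicator {h. 1 \<le> norm h} h \<partial>lborel) = Outer \<sigma>"
      unfolding Outer_def N_def by (rule layer_cake[OF G apos])
    also have "(\<integral>\<^sup>+h. G h * ennreal (1 / norm h powr ?a) * indicator {h. norm h < 1} h \<partial>lborel) \<le> F \<sigma>0"
      unfolding F_def
    proof (intro nn_integral_mono)
      fix h :: 'a
      show "G h * ennreal (1 / norm h powr ?a) * indicator {h. norm h < 1} h \<le> G h * ennreal (1 / norm h powr (real d + \<sigma>0 * p))"
      proof (cases "norm h < 1 \<and> h \<noteq> 0")
        case True
        then have "norm h powr (real d + \<sigma>0 * p) \<le> norm h powr ?a"
          using that p by (intro powr_mono') (auto intro: mult_right_mono)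
        then have "1 / norm h powr ?a \<le> 1 / norm h powr (real d + \<sigma>0 * p)"
          using True by (intro divide_left_mono) auto
        then show ?thesis using True by (auto intro!: mult_left_mono ennreal_leI)
      next
        case False
        then show ?thesis by (auto simp: indicator_def)
      qed
    qed
    finally show ?thesis by (simp add: add_right_mono)
  qed
  define F0r where "F0r = enn2real (F \<sigma>0)"
  have F0r: "F \<sigma>0 = ennreal F0r" "F0r \<ge> 0"
    using fin0 unfolding F0r_def F_def d_def by (auto simp: less_top[symmetric] ennreal_enn2real_if)
  define m1 where "m1 = enn2real M1"
  have m1: "M1 = ennreal m1" "m1 \<ge> 0" using M1 unfolding m1_def by (auto simp: less_top[symmetric])
  define U where "U = (\<lambda>t0 \<sigma>. \<sigma> * F0r + \<sigma> * ((real d + \<sigma> * p) * K * (t0 + 1 + D) ^ d * t0)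
       + K * ((t0 + 1 + D) / t0) ^ d * (real d + \<sigma> * p) / p)"
  define L where "L = (\<lambda>t0 \<sigma>. K * ((t0 - D) / t0) ^ d * (real d + \<sigma> * p) * t0 powr (-(\<sigma>*p)) / p)"
  have upper: "ennreal \<sigma> * F \<sigma> \<le> ennreal (U t0 \<sigma>)" if "0 < \<sigma>" "\<sigma> \<le> \<sigma>0" "t0 \<ge> 1" for \<sigma> t0
  proof -
    define X where "X = (real d + \<sigma> * p) * K * (t0 + 1 + D) ^ d * t0 + K * ((t0 + 1 + D) / t0) ^ d * (real d + \<sigma> * p) / (\<sigma> * p)"
    have Xnn: "X \<ge> 0" unfolding X_def using that K D p
      by (intro add_nonneg_nonneg mult_nonneg_nonneg divide_nonneg_pos) auto
    have o: "Outer \<sigma> \<le> ennreal X"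
      unfolding Outer_def X_def by (rule outer_upper[OF Nm K D Nup[unfolded d_def[symmetric]] that(1) p that(3)])
    have "F \<sigma> \<le> F \<sigma>0 + Outer \<sigma>" by (rule split[OF that(1,2)])
    also have "\<dots> \<le> ennreal F0r + ennreal X" unfolding F0r(1) using o by (rule add_left_mono)
    also have "\<dots> = ennreal (F0r + X)" using F0r(2) Xnn by simp
    finally have "ennreal \<sigma> * F \<sigma> \<le> ennreal \<sigma> * ennreal (F0r + X)" by (rule mult_left_mono) simp
    also have "\<dots> = ennreal (\<sigma> * (F0r + X))" by (rule ennreal_mult[symmetric]) (use that F0r(2) Xnn in auto)
    also have "\<sigma> * (F0r + X) = U t0 \<sigma>"
      using that p unfolding U_def X_def by (simp add: field_simps)
    finally show ?thesis .
  qed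
  have lower: "ennreal (L t0 \<sigma>) \<le> ennreal \<sigma> * F \<sigma> + ennreal (\<sigma> * m1)" if "0 < \<sigma>" "\<sigma> \<le> \<sigma>0" "t0 \<ge> 1" "t0 \<ge> D" for \<sigma> t0
  proof -
    have Lnn: "L t0 \<sigma> \<ge> 0" unfolding L_def using that K D p by (intro divide_nonneg_pos mult_nonneg_nonneg) auto
    define Y where "Y = K * ((t0 - D) / t0) ^ d * (real d + \<sigma> * p) * t0 powr (-(\<sigma>*p)) / (\<sigma>*p)"
    have Y: "Y \<ge> 0" unfolding Y_def using that K D p
      by (intro divide_nonneg_pos mult_nonneg_nonneg) auto
    have LY: "L t0 \<sigma> = \<sigma> * Y" unfolding L_def Y_def using that p by (simp add: field_simps)
    have "ennreal (L t0 \<sigma>) = ennreal \<sigma> * ennreal (K * ((t0 - D) / t0) ^ d * (real d + \<sigma> * p) * t0 powr (-(\<sigma>*p)) / (\<sigma>*p))"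
      unfolding LY Y_def[symmetric] by (rule ennreal_mult) (use that Y in auto)
    also have "\<dots> \<le> ennreal \<sigma> * (Outer \<sigma> + M1)"
      using outer_lower[OF Nm K D Nlo[unfolded d_def[symmetric]] that(1) p that(3,4)]
      unfolding Outer_def by (intro mult_left_mono) auto
    also have "\<dots> \<le> ennreal \<sigma> * (F \<sigma> + M1)"
    proof -
      have "Outer \<sigma> \<le> F \<sigma>"
      proof -
        have apos: "real d + \<sigma> * p > 0" using that p by (simp add: add_nonneg_pos)
        have "Outer \<sigma> = (\<integral>\<^sup>+h. G h * ennreal (1 / norm h powr (real d + \<sigma> * p)) * indicator {h. 1 \<le> norm h} h \<partial>lborel)"
          unfolding Outer_def N_def by (rule layer_cake[OF G apos, symmetric])
        also have "\<dots> \<le> F \<sigma>" unfolding F_def by (intro nn_integral_mono) (auto simp: indicator_def)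
        finally show ?thesis .
      qed
      then show ?thesis by (intro mult_left_mono add_right_mono) auto
    qed
    also have "\<dots> = ennreal \<sigma> * F \<sigma> + ennreal (\<sigma> * m1)"
      using that m1 by (simp add: distrib_left ennreal_mult)
    finally show ?thesis .
  qed
  define f where "f = (\<lambda>n. enn2real (ennreal (s n) * F (s n)))"
  have ev_small: "eventually (\<lambda>n. s n < \<sigma>0) sequentially"
    using order_tendstoD(2)[OF s0 s0pos] .
  have fin: "ennreal (s n) * F (s n) = ennreal (f n)" if "s n < \<sigma>0" for n
  proof -
    have "ennreal (s n) * F (s n) \<le> ennreal (U 1 (s n))" using upper[of "s n" 1] that spos by auto
    then have "ennreal (s n) * F (s n) < \<infinity>" using order.strict_trans1 by fastforce
    then show ?thesis unfolding f_def by (simp add: less_top[symmetric] ennreal_enn2real_if)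
  qed
  define t1 where "t1 = max 1 D + 1"
  have "f \<longlonglongrightarrow> K * real d / p"
  proof (rule sandwich_eps[where tlow = t1 and U = "\<lambda>t0 n. U t0 (s n)" and L = "\<lambda>t0 n. L t0 (s n) - s n * m1"
        and u = "\<lambda>t0. K * ((t0 + 1 + D) / t0) ^ d * real d / p" and l = "\<lambda>t0. K * ((t0 - D) / t0) ^ d * real d / p"])
    fix t0 assume t0: "t0 \<ge> t1"
    then have t0': "t0 \<ge> 1" "t0 \<ge> D" "t0 > 0" unfolding t1_def by auto
    show "eventually (\<lambda>n. L t0 (s n) - s n * m1 \<le> f n \<and> f n \<le> U t0 (s n)) sequentially"
      using ev_small
    proof eventually_elim
      case (elim n)
      have sn: "0 < s n" "s n \<le> \<sigma>0" using elim spos by auto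
      have fn: "f n \<ge> 0" unfolding f_def by simp
      have Unn: "U t0 (s n) \<ge> 0" unfolding U_def using sn t0' F0r K D p by (intro add_nonneg_nonneg mult_nonneg_nonneg divide_nonneg_pos) auto
      have "ennreal (f n) \<le> ennreal (U t0 (s n))" using upper[OF sn t0'(1)] fin[OF elim] by simp
      then have 1: "f n \<le> U t0 (s n)" using Unn by (simp add: ennreal_le_iff)
      have "ennreal (L t0 (s n)) \<le> ennreal (f n + s n * m1)"
        using lower[OF sn t0'(1,2)] fin[OF elim] sn m1 fn by (simp add: ennreal_plus[symmetric] del: ennreal_plus)
      moreover have "0 \<le> f n + s n * m1" using fn sn m1 by simp
      ultimately have "L t0 (s n) \<le> f n + s n * m1" by (metis ennreal_le_iff)
      with 1 show ?case by simp
    qed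
    have "(\<lambda>n. U t0 (s n)) \<longlonglongrightarrow> U t0 0"
      unfolding U_def using p by (intro tendsto_intros s0) auto
    then show "(\<lambda>n. U t0 (s n)) \<longlonglongrightarrow> K * ((t0 + 1 + D) / t0) ^ d * real d / p"
      by (simp add: U_def)
    have "(\<lambda>n. L t0 (s n) - s n * m1) \<longlonglongrightarrow> L t0 0 - 0 * m1"
      unfolding L_def using t0' p by (intro tendsto_intros s0) auto
    then show "(\<lambda>n. L t0 (s n) - s n * m1) \<longlonglongrightarrow> K * ((t0 - D) / t0) ^ d * real d / p"
      using t0' by (simp add: L_def)
  next
    have "((\<lambda>t0. K * ((t0 + (1 + D)) / t0) ^ d * real d / p) \<longlongrightarrow> K * 1 ^ d * real d / p) at_top"
      using p by (intro tendsto_intros lim_ratio_plus) auto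
    then show "((\<lambda>t0. K * ((t0 + 1 + D) / t0) ^ d * real d / p) \<longlongrightarrow> K * real d / p) at_top"
      by (simp add: add.assoc)
    have "((\<lambda>t0. K * ((t0 + (- D)) / t0) ^ d * real d / p) \<longlongrightarrow> K * 1 ^ d * real d / p) at_top"
      using p by (intro tendsto_intros lim_ratio_plus) auto
    then show "((\<lambda>t0. K * ((t0 - D) / t0) ^ d * real d / p) \<longlongrightarrow> K * real d / p) at_top"
      by simp
  qed
  then have "(\<lambda>n. ennreal (f n)) \<longlonglongrightarrow> ennreal (K * real d / p)"
    by (rule tendsto_ennrealI)
  moreover have "eventually (\<lambda>n. ennreal (f n) = ennreal (s n) * F (s n)) sequentially"
    using ev_small by eventually_elim (simp add: fin)
  ultimately have "(\<lambda>n. ennreal (s n) * F (s n)) \<longlonglongrightarrow> ennreal (K * real d / p)"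
    by (rule Lim_transform_eventually)
  then show ?thesis unfolding F_def d_def .
qed

lemma powr_diff_le:
  fixes a b p :: real
  assumes p: "p > 0"
  shows "\<bar>a - b\<bar> powr p \<le> 2 powr p * (\<bar>a\<bar> powr p + \<bar>b\<bar> powr p)"
proof -
  have "\<bar>a - b\<bar> \<le> 2 * max \<bar>a\<bar> \<bar>b\<bar>" by linarith
  then have "\<bar>a - b\<bar> powr p \<le> (2 * max \<bar>a\<bar> \<bar>b\<bar>) powr p" using p by (intro powr_mono2) auto
  also have "\<dots> = 2 powr p * max \<bar>a\<bar> \<bar>b\<bar> powr p" by (simp add: powr_mult)
  also have "max \<bar>a\<bar> \<bar>b\<bar> powr p \<le> \<bar>a\<bar> powr p + \<bar>b\<bar> powr p" by (simp add: max_def)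
  finally show ?thesis by (simp add: mult_left_mono)
qed

lemma F0_finite:
  fixes v :: "'a::euclidean_space \<Rightarrow> real"
  assumes v[measurable]: "v \<in> borel_measurable borel" and T: "T > 0" and p: "p > 0"
    and Lp: "(\<integral>\<^sup>+x. ennreal (\<bar>v x\<bar> powr p) * indicator (QT T) x \<partial>lborel) < \<infinity>"
  shows "F0 T p v < \<infinity>"
proof -
  let ?I = "\<integral>\<^sup>+x. ennreal (\<bar>v x\<bar> powr p) * indicator (QT T) x \<partial>lborel"
  let ?m = "emeasure lborel (QT T :: 'a set)"
  have m: "?m < \<infinity>" using T by (simp add: emeasure_QT)
  have "F0 T p v = (\<integral>\<^sup>+x. (\<integral>\<^sup>+y. ennreal (\<bar>v x - v y\<bar> powr p) * indicator (QT T) y \<partial>lborel) * indicator (QT T) x \<partial>lborel)"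
    unfolding F0_def nn_integral_completion ..
  also have "\<dots> \<le> (\<integral>\<^sup>+x. (\<integral>\<^sup>+y. ennreal (2 powr p) * (ennreal (\<bar>v x\<bar> powr p) * indicator (QT T) x * indicator (QT T) y
        + ennreal (\<bar>v y\<bar> powr p) * indicator (QT T) y * indicator (QT T) x) \<partial>lborel) \<partial>lborel)"
  proof (intro nn_integral_mono_AE AE_I2)
    fix x :: 'a
    have "(\<integral>\<^sup>+y. ennreal (\<bar>v x - v y\<bar> powr p) * indicator (QT T) y \<partial>lborel) * indicator (QT T) x
        = (\<integral>\<^sup>+y. ennreal (\<bar>v x - v y\<bar> powr p) * indicator (QT T) y * indicator (QT T) x \<partial>lborel)"
      by (rule nn_integral_multc[symmetric]) measurable
    also have "\<dots> \<le> (\<integral>\<^sup>+y. ennreal (2 powr p) * (ennreal (\<bar>v x\<bar> powr p) * indicator (QT T) x * indicator (QT T) y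
        + ennreal (\<bar>v y\<bar> powr p) * indicator (QT T) y * indicator (QT T) x) \<partial>lborel)"
    proof (intro nn_integral_mono)
      fix y
      have "ennreal (\<bar>v x - v y\<bar> powr p) \<le> ennreal (2 powr p * (\<bar>v x\<bar> powr p + \<bar>v y\<bar> powr p))"
        using powr_diff_le[OF p] by (rule ennreal_leI)
      also have "\<dots> = ennreal (2 powr p) * (ennreal (\<bar>v x\<bar> powr p) + ennreal (\<bar>v y\<bar> powr p))"
        by (simp add: ennreal_mult ennreal_plus[symmetric] del: ennreal_plus)
      finally show "ennreal (\<bar>v x - v y\<bar> powr p) * indicator (QT T) y * indicator (QT T) x
        \<le> ennreal (2 powr p) * (ennreal (\<bar>v x\<bar> powr p) * indicator (QT T) x * indicator (QT T) y
        + ennreal (\<bar>v y\<bar> powr p) * indicator (QT T) y * indicator (QT T) x)"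
        by (auto simp: indicator_def)
    qed
    finally show "(\<integral>\<^sup>+y. ennreal (\<bar>v x - v y\<bar> powr p) * indicator (QT T) y \<partial>lborel) * indicator (QT T) x
        \<le> (\<integral>\<^sup>+y. ennreal (2 powr p) * (ennreal (\<bar>v x\<bar> powr p) * indicator (QT T) x * indicator (QT T) y
        + ennreal (\<bar>v y\<bar> powr p) * indicator (QT T) y * indicator (QT T) x) \<partial>lborel)" .
  qed
  also have "\<dots> = (\<integral>\<^sup>+x. ennreal (2 powr p) * (ennreal (\<bar>v x\<bar> powr p) * indicator (QT T) x * ?m + ?I * indicator (QT T) x) \<partial>lborel)"
    by (intro nn_integral_cong)
       (simp add: nn_integral_cmult nn_integral_add nn_integral_multc nn_integral_cmult_indicator)
  also have "\<dots> = ennreal (2 powr p) * (?I * ?m + ?I * ?m)"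
    by (simp add: nn_integral_cmult nn_integral_add nn_integral_multc nn_integral_cmult_indicator)
  also have "\<dots> < \<infinity>" using Lp m by (simp add: ennreal_mult_less_top ennreal_mult_less_top)
  finally show ?thesis .
qed

theorem mainTheorem2:
  fixes u :: "'a::euclidean_space \<Rightarrow> real" and s :: "nat \<Rightarrow> real" and T p :: real
  assumes "T > 0" and "p \<ge> 1"
    and "\<forall>n. 0 < s n \<and> s n < 1"
    and "s \<longlonglongrightarrow> 0"
    and "W_torus T (s 0) p u"
  shows "(\<lambda>n. ennreal (s n) * Fs T p (s n) u) \<longlonglongrightarrow>
           ennreal (real DIM('a) * measure lborel (ball (0::'a) 1) / (p * T ^ DIM('a))) * F0 T p u"
proof -
  note T = assms(1)
  have p: "p > 0" using assms(2) by simp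
  have spos: "\<forall>n. 0 < s n" using assms(3) by simp
  have um: "u \<in> borel_measurable lebesgue" and uper: "\<forall>b\<in>Basis. AE x in lebesgue. u (x + T *\<^sub>R b) = u x"
    and uLp: "(\<integral>\<^sup>+ x \<in> QT T. ennreal (\<bar>u x\<bar> powr p) \<partial>lebesgue) < \<infinity>" and uFs: "Fs T p (s 0) u < \<infinity>"
    using assms(5) unfolding W_torus_def Lp_torus_def by auto
  obtain v where vm: "v \<in> borel_measurable lborel" and uv: "AE x in lborel. u x = v x"
    using completion_ex_borel_measurable_real[OF um] by blast
  have v[measurable]: "v \<in> borel_measurable borel" using vm by simp
  have vper: "\<forall>b\<in>Basis. AE z in lborel. v (z + T *\<^sub>R b) = v z"
  proof
    fix b :: 'a assume b: "b \<in> Basis"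
    have "AE z in lborel. u (z + T *\<^sub>R b) = u z" using uper b by (simp add: AE_completion_iff)
    moreover have "AE z in lborel. u (z + T *\<^sub>R b) = v (z + T *\<^sub>R b)" by (rule AE_lborel_shift[OF uv])
    ultimately show "AE z in lborel. v (z + T *\<^sub>R b) = v z" using uv by eventually_elim simp
  qed
  have Fs_uv: "Fs T p \<sigma> u = Fs T p \<sigma> v" for \<sigma>
    unfolding Fs_def nn_integral_completion
  proof (rule nn_integral_cong_AE)
    show "AE x in lborel. (\<integral>\<^sup>+ y. ennreal (\<bar>u x - u y\<bar> powr p / norm (x - y) powr (real DIM('a) + \<sigma> * p)) \<partial>lborel) * indicator (QT T) x =
        (\<integral>\<^sup>+ y. ennreal (\<bar>v x - v y\<bar> powr p / norm (x - y) powr (real DIM('a) + \<sigma> * p)) \<partial>lborel) * indicator (QT T) x"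
      using uv
    proof eventually_elim
      case (elim x)
      have "(\<integral>\<^sup>+ y. ennreal (\<bar>u x - u y\<bar> powr p / norm (x - y) powr (real DIM('a) + \<sigma> * p)) \<partial>lborel)
          = (\<integral>\<^sup>+ y. ennreal (\<bar>v x - v y\<bar> powr p / norm (x - y) powr (real DIM('a) + \<sigma> * p)) \<partial>lborel)"
        by (rule nn_integral_cong_AE) (use uv in eventually_elim, simp add: elim)
      then show ?case by simp
    qed
  qed
  have F0_uv: "F0 T p u = F0 T p v"
    unfolding F0_def nn_integral_completion
  proof (rule nn_integral_cong_AE)
    show "AE x in lborel. (\<integral>\<^sup>+ y. ennreal (\<bar>u x - u y\<bar> powr p) * indicator (QT T) y \<partial>lborel) * indicator (QT T) x =
        (\<integral>\<^sup>+ y. ennreal (\<bar>v x - v y\<bar> powr p) * indicator (QT T) y \<partial>lborel) * indicator (QT T) x"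
      using uv
    proof eventually_elim
      case (elim x)
      have "(\<integral>\<^sup>+ y. ennreal (\<bar>u x - u y\<bar> powr p) * indicator (QT T) y \<partial>lborel)
          = (\<integral>\<^sup>+ y. ennreal (\<bar>v x - v y\<bar> powr p) * indicator (QT T) y \<partial>lborel)"
        by (rule nn_integral_cong_AE) (use uv in eventually_elim, simp add: elim)
      then show ?case by simp
    qed
  qed
  have vLp: "(\<integral>\<^sup>+x. ennreal (\<bar>v x\<bar> powr p) * indicator (QT T) x \<partial>lborel) < \<infinity>"
  proof -
    have "(\<integral>\<^sup>+x. ennreal (\<bar>v x\<bar> powr p) * indicator (QT T) x \<partial>lborel) = (\<integral>\<^sup>+ x \<in> QT T. ennreal (\<bar>u x\<bar> powr p) \<partial>lebesgue)"
      unfolding nn_integral_completion by (rule nn_integral_cong_AE) (use uv in eventually_elim, simp)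
    then show ?thesis using uLp by simp
  qed
  define G where "G = Gf T p v"
  have G[measurable]: "G \<in> borel_measurable borel" unfolding G_def by measurable
  have Gper: "\<forall>b\<in>Basis. \<forall>h. G (h + T *\<^sub>R b) = G h"
    unfolding G_def using vper by (auto intro: Gf_per[OF v])
  define A where "A = F0 T p v"
  have A_eq: "A = (\<integral>\<^sup>+h. G h * indicator (QT T) h \<partial>lborel)"
    unfolding A_def G_def by (rule F0_eq[OF v T vper])
  have Afin: "A < \<infinity>" unfolding A_def by (rule F0_finite[OF v T p vLp])
  define Ar where "Ar = enn2real A"
  have Ar: "A = ennreal Ar" "Ar \<ge> 0" using Afin unfolding Ar_def by (auto simp: less_top[symmetric])
  define d where "d = DIM('a)"
  define \<omega> where "\<omega> = measure lborel (ball (0::'a) 1)"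
  define D where "D = T * sqrt (real d)"
  define K where "K = Ar * \<omega> / T ^ d"
  have \<omega>: "\<omega> \<ge> 0" unfolding \<omega>_def by simp
  have D: "D \<ge> 0" unfolding D_def using T by simp
  have K: "K \<ge> 0" unfolding K_def using Ar \<omega> T by simp
  have Td: "T ^ d > 0" using T by simp
  define M where "M = (\<lambda>r. \<integral>\<^sup>+h. G h * indicator (ball 0 r) h \<partial>lborel)"
  have Mup: "M \<rho> \<le> ennreal (K * (\<rho> + D) ^ d)" if "\<rho> \<ge> 0" for \<rho>
  proof -
    have "ennreal (T ^ d) * M \<rho> \<le> A * ennreal ((\<rho> + D) ^ d * \<omega>)"
      using ergodic_bounds(1)[OF G T Gper that] unfolding M_def A_eq D_def d_def \<omega>_def .
    also have "\<dots> = ennreal (Ar * ((\<rho> + D) ^ d * \<omega>))"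
      unfolding Ar(1) by (rule ennreal_mult[symmetric]) (use Ar(2) that D \<omega> in auto)
    finally have "M \<rho> \<le> ennreal (Ar * ((\<rho> + D) ^ d * \<omega>) / T ^ d)" by (rule ennreal_mult_le_divide[OF Td])
    also have "Ar * ((\<rho> + D) ^ d * \<omega>) / T ^ d = K * (\<rho> + D) ^ d" unfolding K_def by simp
    finally show ?thesis .
  qed
  have Mlo: "ennreal (K * (\<rho> - D) ^ d) \<le> M \<rho>" if "\<rho> \<ge> D" for \<rho>
  proof -
    have "ennreal (Ar * ((\<rho> - D) ^ d * \<omega>)) = A * ennreal ((\<rho> - D) ^ d * \<omega>)"
      using Ar that D \<omega> by (simp add: ennreal_mult)
    also have "\<dots> \<le> ennreal (T ^ d) * M \<rho>"
      using ergodic_bounds(2)[OF G T Gper, of \<rho>] that unfolding M_def A_eq D_def d_def \<omega>_def by simp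
    finally have "ennreal (Ar * ((\<rho> - D) ^ d * \<omega>) / T ^ d) \<le> M \<rho>" by (rule ennreal_divide_le_mult[OF Td])
    also have "Ar * ((\<rho> - D) ^ d * \<omega>) / T ^ d = K * (\<rho> - D) ^ d" unfolding K_def by simp
    finally show ?thesis .
  qed
  define N where "N = (\<lambda>t. \<integral>\<^sup>+h. G h * indicator {h. 1 \<le> norm h \<and> norm h \<le> t} h \<partial>lborel)"
  have Nup: "N t \<le> ennreal (K * (t + 1 + D) ^ d)" if "t \<ge> 1" for t
  proof -
    have "N t \<le> M (t + 1)" unfolding N_def M_def by (intro nn_integral_mono) (auto simp: indicator_def)
    also have "\<dots> \<le> ennreal (K * (t + 1 + D) ^ d)" using Mup[of "t + 1"] that by simp
    finally show ?thesis .
  qed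
  have M1: "M 1 < \<infinity>" using Mup[of 1] by (simp add: le_less_trans)
  have Nlo: "ennreal (K * (t - D) ^ d) \<le> N t + M 1" if "t \<ge> 1" "t \<ge> D" for t
  proof -
    have "ennreal (K * (t - D) ^ d) \<le> M t" using Mlo that by simp
    also have "\<dots> \<le> (\<integral>\<^sup>+h. G h * indicator {h. 1 \<le> norm h \<and> norm h \<le> t} h + G h * indicator (ball 0 1) h \<partial>lborel)"
      unfolding M_def by (intro nn_integral_mono) (auto simp: indicator_def)
    also have "\<dots> = N t + M 1" unfolding N_def M_def by (rule nn_integral_add) measurable
    finally show ?thesis .
  qed
  have fin0: "(\<integral>\<^sup>+h. G h * ennreal (1 / norm h powr (real DIM('a) + s 0 * p)) \<partial>lborel) < \<infinity>"
    using uFs unfolding Fs_uv Fs_eq[OF v] G_def .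
  have lim: "(\<lambda>n. ennreal (s n) * (\<integral>\<^sup>+h. G h * ennreal (1 / norm h powr (real DIM('a) + s n * p)) \<partial>lborel))
      \<longlonglongrightarrow> ennreal (K * real DIM('a) / p)"
    by (rule abstract_limit[OF G p spos assms(4) _ fin0 N_def K D M1 Nup[unfolded d_def] Nlo[unfolded d_def]])
       (use spos in auto)
  have eq1: "(\<lambda>n. ennreal (s n) * Fs T p (s n) u) = (\<lambda>n. ennreal (s n) * (\<integral>\<^sup>+h. G h * ennreal (1 / norm h powr (real DIM('a) + s n * p)) \<partial>lborel))"
    unfolding Fs_uv Fs_eq[OF v] G_def ..
  have eq2: "ennreal (real DIM('a) * measure lborel (ball (0::'a) 1) / (p * T ^ DIM('a))) * F0 T p u = ennreal (K * real DIM('a) / p)"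
  proof -
    have "ennreal (real DIM('a) * measure lborel (ball (0::'a) 1) / (p * T ^ DIM('a))) * F0 T p u
        = ennreal (real d * \<omega> / (p * T ^ d)) * ennreal Ar"
      unfolding F0_uv A_def[symmetric] Ar(1) d_def \<omega>_def ..
    also have "\<dots> = ennreal (real d * \<omega> / (p * T ^ d) * Ar)"
      using \<omega> p T Ar by (subst ennreal_mult) auto
    also have "real d * \<omega> / (p * T ^ d) * Ar = K * real d / p" unfolding K_def using p T by (simp add: field_simps)
    finally show ?thesis by (simp add: d_def)
  qed
  show ?thesis unfolding eq1 eq2 by (rule lim)
qed

end
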